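(* Let $\mathcal{X}$ and $\mathcal{Y}$ be finite sets, let $\Pr$ be a probability distribution on $\mathcal{X}$, let $\delta:\mathcal{X}\times\mathcal{Y}\to\mathbb{R}$, and let $\bar\pi,\pi_1,\dots,\pi_m$ be stochastic policies, each $\pi_i$ having support for $\bar\pi$ and satisfying $\sigma^2_\delta(\bar\pi\|\pi_i)>0$. Let $\mathcal{D}=\bigcup_{i=1}^m\mathcal{D}^i$ be a log dataset in which, for each $i$, $\mathcal{D}^i$ consists of $n_i$ samples $(x^i_j,y^i_j,\delta^i_j,p^i_j)$, $j=1,\dots,n_i$, with $x^i_j\sim\Pr$, $y^i_j\sim\pi_i(\cdot\mid x^i_j)$, $\delta^i_j=\delta(x^i_j,y^i_j)$, $p^i_j=\pi_i(y^i_j\mid x^i_j)$, all draws independent. For $\lambda=(\lambda_1,\dots,\lambda_m)$ with $\lambda_i\ge0$ and $\sum_i\lambda_in_i=1$ let $$\hat U_\lambda(\bar\pi)=\sum_{i=1}^m\lambda_i\sum_{j=1}^{n_i}\frac{\delta^i_j\,\bar\pi(y^i_j\mid x^i_j)}{p^i_j},$$ and let $\hat U_{weight}(\bar\pi)$ denote $\hat U_\lambda(\bar\pi)$ with $\lambda_i=\lambda_i^*=\Big(\sigma^2_\delta(\bar\pi\|\pi_i)\sum_{j=1}^m\frac{n_j}{\sigma^2_\delta(\bar\pi\|\pi_j)}\Big)^{-1}$. Then for every such $\lambda$, $$\mathrm{Var}_{\mathcal{D}}[\hat U_{weight}(\bar\pi)]=\frac{1}{\sum_{i=1}^m\frac{n_i}{\sigma^2_\delta(\bar\pi\|\pi_i)}}\le\mathrm{Var}_{\mathcal{D}}[\hat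 U_\lambda(\bar\pi)].$$
   Context: A stochastic policy $\pi$ assigns to each $x\in\mathcal{X}$ a probability distribution $\pi(\cdot\mid x)$ on $\mathcal{Y}$. The utility is $U(\pi)=\sum_{x,y}\Pr(x)\pi(y\mid x)\delta(x,y)$. A policy $\pi$ has support for $\pi'$ if $\delta(x,y)\pi'(y\mid x)\neq0$ implies $\pi(y\mid x)>0$ for all $x,y$. For $\pi$ having support for $\bar\pi$, the divergence is $\sigma^2_\delta(\bar\pi\|\pi)=\mathrm{Var}_{x\sim\Pr,\,y\sim\pi(\cdot\mid x)}\big[\delta(x,y)\bar\pi(y\mid x)/\pi(y\mid x)\big]=\sum_{x,y}\frac{(\delta(x,y)\bar\pi(y\mid x))^2}{\pi(y\mid x)}\Pr(x)-U(\bar\pi)^2$. Variances are over the random draw of $\mathcal{D}$. *)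

theory Defs
  imports "HOL-Probability.Probability"
begin

text \<open>A stochastic policy is a map x to a distribution on y; pi(y|x) = pmf (pi x) y.
  One logged sample: x drawn from Pr, then y drawn from pi(. | x).\<close>
definition sample_pmf :: "'x pmf \<Rightarrow> ('x \<Rightarrow> 'y pmf) \<Rightarrow> ('x \<times> 'y) pmf" where
  "sample_pmf Pr pol = bind_pmf Pr (\<lambda>x. map_pmf (\<lambda>y. (x, y)) (pol x))"

definition has_support :: "('x \<Rightarrow> 'y \<Rightarrow> real) \<Rightarrow> ('x \<Rightarrow> 'y pmf) \<Rightarrow> ('x \<Rightarrow> 'y pmf) \<Rightarrow> bool" where
  "has_support \<delta> pol pol' \<longleftrightarrow> (\<forall>x y. \<delta> x y * pmf (pol' x) y \<noteq> 0 \<longrightarrow> pmf (pol x) y > 0)"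

definition divergence :: "'x pmf \<Rightarrow> ('x \<Rightarrow> 'y \<Rightarrow> real) \<Rightarrow> ('x \<Rightarrow> 'y pmf) \<Rightarrow> ('x \<Rightarrow> 'y pmf) \<Rightarrow> real" where
  "divergence Pr \<delta> pibar pol =
     measure_pmf.variance (sample_pmf Pr pol)
       (\<lambda>(x, y). \<delta> x y * pmf (pibar x) y / pmf (pol x) y)"

definition dataset_pmf :: "'x pmf \<Rightarrow> (nat \<Rightarrow> 'x \<Rightarrow> 'y pmf) \<Rightarrow> nat \<Rightarrow> (nat \<Rightarrow> nat)
    \<Rightarrow> (nat \<times> nat \<Rightarrow> 'x \<times> 'y) pmf" where
  "dataset_pmf Pr pol m n =
     Pi_pmf {(i, j). i < m \<and> j < n i} undefined (\<lambda>(i, j). sample_pmf Pr (pol i))"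

definition U_hat :: "('x \<Rightarrow> 'y \<Rightarrow> real) \<Rightarrow> ('x \<Rightarrow> 'y pmf) \<Rightarrow> (nat \<Rightarrow> 'x \<Rightarrow> 'y pmf)
    \<Rightarrow> nat \<Rightarrow> (nat \<Rightarrow> nat) \<Rightarrow> (nat \<Rightarrow> real) \<Rightarrow> (nat \<times> nat \<Rightarrow> 'x \<times> 'y) \<Rightarrow> real" where
  "U_hat \<delta> pibar pol m n lam D =
     (\<Sum>i<m. lam i * (\<Sum>j<n i. (case D (i, j) of (x, y) \<Rightarrow>
        \<delta> x y * pmf (pibar x) y / pmf (pol i x) y)))"

definition weight_lambda :: "'x pmf \<Rightarrow> ('x \<Rightarrow> 'y \<Rightarrow> real) \<Rightarrow> ('x \<Rightarrow> 'y pmf)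
    \<Rightarrow> (nat \<Rightarrow> 'x \<Rightarrow> 'y pmf) \<Rightarrow> nat \<Rightarrow> (nat \<Rightarrow> nat) \<Rightarrow> nat \<Rightarrow> real" where
  "weight_lambda Pr \<delta> pibar pol m n i =
     1 / (divergence Pr \<delta> pibar (pol i) *
          (\<Sum>j<m. real (n j) / divergence Pr \<delta> pibar (pol j)))"

end

theory Submission imports Defs begin

lemma fin_Pi_pmf:
  fixes p :: "'k \<Rightarrow> 'a::finite pmf"
  assumes "finite A"
  shows "finite (set_pmf (Pi_pmf A d p))"
proof -
  have sub: "set_pmf (Pi_pmf A d p) \<subseteq> (\<lambda>f x. if x \<in> A then f x else d) ` (PiE A (\<lambda>_. UNIV))"
  proof
    fix F assume "F \<in> set_pmf (Pi_pmf A d p)"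
    then have F: "\<forall>x. x \<notin> A \<longrightarrow> F x = d"
      using subsetD[OF set_Pi_pmf_subset[OF assms]] by simp
    show "F \<in> (\<lambda>f x. if x \<in> A then f x else d) ` (PiE A (\<lambda>_. UNIV))"
    proof (rule image_eqI[where x="restrict F A"])
      show "F = (\<lambda>x. if x \<in> A then restrict F A x else d)" using F by (simp add: fun_eq_iff)
      show "restrict F A \<in> PiE A (\<lambda>_. UNIV)" by simp
    qed
  qed
  have fin: "finite (PiE A (\<lambda>_. UNIV::'a set))" using assms by (simp add: finite_PiE)
  show ?thesis by (rule finite_subset[OF sub finite_imageI[OF fin]])
qed

lemma E_pair_prod:
  fixes f :: "'a \<Rightarrow> real" and g :: "'b \<Rightarrow> real"
  assumes "finite (set_pmf p)" "finite (set_pmf q)"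
  shows "measure_pmf.expectation (pair_pmf p q) (\<lambda>x. f (fst x) * g (snd x))
       = measure_pmf.expectation p f * measure_pmf.expectation q g"
proof -
  have "measure_pmf.expectation (pair_pmf p q) (\<lambda>x. f (fst x) * g (snd x))
      = (\<Sum>x\<in>set_pmf p \<times> set_pmf q. f (fst x) * g (snd x) * pmf (pair_pmf p q) x)"
    by (rule integral_measure_pmf_real) (use assms in auto)
  also have "\<dots> = (\<Sum>a\<in>set_pmf p. \<Sum>b\<in>set_pmf q. (f a * pmf p a) * (g b * pmf q b))"
    by (simp add: sum.cartesian_product, rule sum.cong) (auto simp: pmf_pair)
  also have "\<dots> = (\<Sum>a\<in>set_pmf p. f a * pmf p a) * (\<Sum>b\<in>set_pmf q. g b * pmf q b)"
    by (simp add: sum_product)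
  also have "\<dots> = measure_pmf.expectation p f * measure_pmf.expectation q g"
    using assms by (simp add: integral_measure_pmf_real)
  finally show ?thesis .
qed

lemma var_pair:
  fixes f :: "'a \<Rightarrow> real" and g :: "'b \<Rightarrow> real"
  assumes fp: "finite (set_pmf p)" and fq: "finite (set_pmf q)"
  shows "measure_pmf.variance (pair_pmf p q) (\<lambda>x. f (fst x) + g (snd x))
       = measure_pmf.variance p f + measure_pmf.variance q g"
proof -
  have fpq: "finite (set_pmf (pair_pmf p q))" using fp fq by (simp add: set_pair_pmf)
  note I = integrable_measure_pmf_finite[OF fp] integrable_measure_pmf_finite[OF fq]
    integrable_measure_pmf_finite[OF fpq]
  define Ef where "Ef = measure_pmf.expectation p f"
  define Eg where "Eg = measure_pmf.expectation q g"
  have EZ: "measure_pmf.expectation (pair_pmf p q) (\<lambda>x. f (fst x) + g (snd x)) = Ef + Eg"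
    unfolding Ef_def Eg_def by (subst Bochner_Integration.integral_add) (auto intro: I)
  have eq: "(\<lambda>x. (f (fst x) + g (snd x) - (Ef + Eg))\<^sup>2) =
     (\<lambda>x. ((\<lambda>a. (f a - Ef)\<^sup>2) (fst x) + (\<lambda>b. (g b - Eg)\<^sup>2) (snd x)) + 2 * ((\<lambda>a. f a - Ef) (fst x) * (\<lambda>b. g b - Eg) (snd x)))"
    by (auto simp: fun_eq_iff power2_eq_square algebra_simps)
  have z: "measure_pmf.expectation p (\<lambda>a. f a - Ef) = 0"
    unfolding Ef_def by (subst Bochner_Integration.integral_diff) (auto intro: I)
  have c: "measure_pmf.expectation (pair_pmf p q) (\<lambda>x. (f (fst x) - Ef) * (g (snd x) - Eg)) = 0"
    using E_pair_prod[OF fp fq, of "\<lambda>a. f a - Ef" "\<lambda>b. g b - Eg"] z by simp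
  have "measure_pmf.variance (pair_pmf p q) (\<lambda>x. f (fst x) + g (snd x))
     = measure_pmf.expectation (pair_pmf p q) (\<lambda>x. (f (fst x) - Ef)\<^sup>2 + (g (snd x) - Eg)\<^sup>2 + 2 * ((f (fst x) - Ef) * (g (snd x) - Eg)))"
    by (simp only: EZ eq)
  also have "\<dots> = measure_pmf.expectation (pair_pmf p q) (\<lambda>x. (f (fst x) - Ef)\<^sup>2) + measure_pmf.expectation (pair_pmf p q) (\<lambda>x. (g (snd x) - Eg)\<^sup>2) + 2 * measure_pmf.expectation (pair_pmf p q) (\<lambda>x. (f (fst x) - Ef) * (g (snd x) - Eg))"
    apply (subst Bochner_Integration.integral_add, (rule integrable_measure_pmf_finite[OF fpq])+)+
    apply (subst integral_mult_right_zero)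
    apply (rule refl)
    done
  also have "\<dots> = measure_pmf.variance p f + measure_pmf.variance q g"
    unfolding c using expectation_pair_pmf_fst[where f="\<lambda>a. (f a - Ef)\<^sup>2" and p=p and q=q] expectation_pair_pmf_snd[where f="\<lambda>b. (g b - Eg)\<^sup>2" and p=p and q=q]
    by (simp add: Ef_def Eg_def)
  finally show ?thesis .
qed

lemma var_sum_Pi:
  fixes p :: "'k \<Rightarrow> 'a::finite pmf" and h :: "'k \<Rightarrow> 'a \<Rightarrow> real"
  assumes "finite A"
  shows "measure_pmf.variance (Pi_pmf A d p) (\<lambda>D. \<Sum>k\<in>A. h k (D k))
       = (\<Sum>k\<in>A. measure_pmf.variance (p k) (h k))"
  using assms
proof (induction A rule: finite_induct)
  case empty
  then show ?case by simp
next
  case (insert x A)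
  have hfun: "(\<lambda>z. (\<lambda>D. \<Sum>k\<in>insert x A. h k (D k)) ((\<lambda>(y,f). f(x:=y)) z))
     = (\<lambda>z. h x (fst z) + (\<lambda>F. \<Sum>k\<in>A. h k (F k)) (snd z))"
  proof
    fix z :: "'a \<times> ('k \<Rightarrow> 'a)"
    obtain y F where z: "z = (y, F)" by (cases z)
    have "(\<Sum>k\<in>A. h k ((F(x:=y)) k)) = (\<Sum>k\<in>A. h k (F k))"
      using insert(2) by (intro sum.cong) auto
    then show "(\<lambda>D. \<Sum>k\<in>insert x A. h k (D k)) ((\<lambda>(y,f). f(x:=y)) z)
     = h x (fst z) + (\<lambda>F. \<Sum>k\<in>A. h k (F k)) (snd z)"
      using insert(1,2) by (simp add: z)
  qed
  have hfun': "(\<Sum>k\<in>insert x A. h k ((case z of (y, f) \<Rightarrow> f(x := y)) k)) = h x (fst z) + (\<Sum>k\<in>A. h k (snd z k))" for z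
    using fun_cong[OF hfun, of z] by simp
  have "measure_pmf.variance (Pi_pmf (insert x A) d p) (\<lambda>D. \<Sum>k\<in>insert x A. h k (D k))
     = measure_pmf.variance (pair_pmf (p x) (Pi_pmf A d p)) (\<lambda>z. h x (fst z) + (\<lambda>F. \<Sum>k\<in>A. h k (F k)) (snd z))"
    unfolding Pi_pmf_insert[OF insert(1,2)] integral_map_pmf
    by (simp only: hfun')
  also have "\<dots> = measure_pmf.variance (p x) (h x) + measure_pmf.variance (Pi_pmf A d p) (\<lambda>F. \<Sum>k\<in>A. h k (F k))"
    by (rule var_pair) (simp_all add: fin_Pi_pmf insert(1))
  also have "\<dots> = (\<Sum>k\<in>insert x A. measure_pmf.variance (p k) (h k))"
    using insert by simp
  finally show ?case .
qed

lemma var_cmult: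
  fixes g :: "'a::finite \<Rightarrow> real"
  shows "measure_pmf.variance M (\<lambda>z. c * g z) = c\<^sup>2 * measure_pmf.variance M g"
proof -
  have "measure_pmf.variance M (\<lambda>z. c * g z) = measure_pmf.expectation M (\<lambda>z. c\<^sup>2 * (g z - measure_pmf.expectation M g)\<^sup>2)"
    by (simp add: power2_eq_square algebra_simps)
  also have "\<dots> = c\<^sup>2 * measure_pmf.variance M g" by simp
  finally show ?thesis .
qed

lemma var_U_hat:
  fixes Pr :: "'x::finite pmf"
    and \<delta> :: "'x \<Rightarrow> 'y::finite \<Rightarrow> real"
    and pibar :: "'x \<Rightarrow> 'y pmf"
    and pol :: "nat \<Rightarrow> 'x \<Rightarrow> 'y pmf"
  shows "measure_pmf.variance (dataset_pmf Pr pol m n) (U_hat \<delta> pibar pol m n lam)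
     = (\<Sum>i<m. (lam i)\<^sup>2 * real (n i) * divergence Pr \<delta> pibar (pol i))"
proof -
  define K where "K = {(i, j). i < m \<and> j < n i}"
  define g where "g i = (\<lambda>(x, y). \<delta> x y * pmf (pibar x) y / pmf (pol i x) y)" for i
  define h where "h k = (\<lambda>z. lam (fst k) * g (fst k) z)" for k :: "nat \<times> nat"
  have KS: "K = Sigma {..<m} (\<lambda>i. {..<n i})" unfolding K_def by auto
  have finK: "finite K" unfolding KS by auto
  have U: "U_hat \<delta> pibar pol m n lam = (\<lambda>D. \<Sum>k\<in>K. h k (D k))"
  proof
    fix D :: "nat \<times> nat \<Rightarrow> 'x \<times> 'y"
    have "U_hat \<delta> pibar pol m n lam D = (\<Sum>i<m. \<Sum>j<n i. h (i, j) (D (i, j)))"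
      unfolding U_hat_def h_def g_def by (simp add: sum_distrib_left case_prod_unfold)
    also have "\<dots> = (\<Sum>k\<in>K. h k (D k))"
      unfolding KS by (simp add: sum.Sigma)
    finally show "U_hat \<delta> pibar pol m n lam D = (\<Sum>k\<in>K. h k (D k))" .
  qed
  have "measure_pmf.variance (dataset_pmf Pr pol m n) (U_hat \<delta> pibar pol m n lam)
      = (\<Sum>k\<in>K. measure_pmf.variance ((\<lambda>(i, j). sample_pmf Pr (pol i)) k) (h k))"
    unfolding U dataset_pmf_def K_def[symmetric] by (rule var_sum_Pi[OF finK])
  also have "\<dots> = (\<Sum>k\<in>K. (lam (fst k))\<^sup>2 * divergence Pr \<delta> pibar (pol (fst k)))"
  proof (intro sum.cong refl)
    fix k assume "k \<in> K"
    obtain i j where k: "k = (i, j)" by force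
    have vi: "measure_pmf.variance (sample_pmf Pr (pol i)) (\<lambda>z. lam i * g i z) = (lam i)\<^sup>2 * divergence Pr \<delta> pibar (pol i)"
    proof -
      have a: "measure_pmf.variance (sample_pmf Pr (pol i)) (\<lambda>z. lam i * g i z) = (lam i)\<^sup>2 * measure_pmf.variance (sample_pmf Pr (pol i)) (g i)"
        by (rule var_cmult)
      have b: "measure_pmf.variance (sample_pmf Pr (pol i)) (g i) = divergence Pr \<delta> pibar (pol i)"
        unfolding divergence_def g_def by (rule refl)
      show ?thesis by (simp only: a b)
    qed
    show "measure_pmf.variance ((\<lambda>(i, j). sample_pmf Pr (pol i)) k) (h k) = (lam (fst k))\<^sup>2 * divergence Pr \<delta> pibar (pol (fst k))"
    proof -
      have hk: "h k = (\<lambda>z. lam i * g i z)" by (simp add: k h_def)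
      show ?thesis unfolding hk unfolding k case_prod_conv fst_conv vi by (rule refl)
    qed
  qed
  also have "\<dots> = (\<Sum>i<m. \<Sum>j<n i. (lam i)\<^sup>2 * divergence Pr \<delta> pibar (pol i))"
    unfolding KS by (subst sum.Sigma) (auto simp: case_prod_unfold)
  also have "\<dots> = (\<Sum>i<m. (lam i)\<^sup>2 * real (n i) * divergence Pr \<delta> pibar (pol i))"
    by (simp add: algebra_simps)
  finally show ?thesis .
qed

theorem theorem6p4:
  fixes Pr :: "'x::finite pmf"
    and \<delta> :: "'x \<Rightarrow> 'y::finite \<Rightarrow> real"
    and pibar :: "'x \<Rightarrow> 'y pmf"
    and pol :: "nat \<Rightarrow> 'x \<Rightarrow> 'y pmf"
    and m :: nat and n :: "nat \<Rightarrow> nat"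
  assumes supp: "\<And>i. i < m \<Longrightarrow> has_support \<delta> (pol i) pibar"
    and pos: "\<And>i. i < m \<Longrightarrow> divergence Pr \<delta> pibar (pol i) > 0"
  shows "measure_pmf.variance (dataset_pmf Pr pol m n)
            (U_hat \<delta> pibar pol m n (weight_lambda Pr \<delta> pibar pol m n))
          = 1 / (\<Sum>i<m. real (n i) / divergence Pr \<delta> pibar (pol i))
       \<and> (\<forall>lam :: nat \<Rightarrow> real.
            (\<forall>i<m. lam i \<ge> 0) \<and> (\<Sum>i<m. lam i * real (n i)) = 1 \<longrightarrow>
            1 / (\<Sum>i<m. real (n i) / divergence Pr \<delta> pibar (pol i))
              \<le> measure_pmf.variance (dataset_pmf Pr pol m n) (U_hat \<delta> pibar pol m n lam))"
proof -
  define v where "v i = divergence Pr \<delta> pibar (pol i)" for i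
  define S where "S = (\<Sum>i<m. real (n i) / v i)"
  have vpos: "i < m \<Longrightarrow> v i > 0" for i using pos by (simp add: v_def)
  have Sge: "S \<ge> 0" unfolding S_def using vpos by (intro sum_nonneg) (simp add: less_imp_le)
  have part1: "measure_pmf.variance (dataset_pmf Pr pol m n)
            (U_hat \<delta> pibar pol m n (weight_lambda Pr \<delta> pibar pol m n)) = 1 / S"
  proof -
    have "measure_pmf.variance (dataset_pmf Pr pol m n)
            (U_hat \<delta> pibar pol m n (weight_lambda Pr \<delta> pibar pol m n))
        = (\<Sum>i<m. (1 / (v i * S))\<^sup>2 * real (n i) * v i)"
      unfolding var_U_hat by (simp add: weight_lambda_def v_def S_def)
    also have "\<dots> = (\<Sum>i<m. (real (n i) / v i) / S\<^sup>2)"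
      using vpos by (intro sum.cong refl) (simp add: power2_eq_square field_simps)
    also have "\<dots> = S / S\<^sup>2" by (simp add: S_def sum_divide_distrib)
    also have "\<dots> = 1 / S" by (simp add: power2_eq_square)
    finally show ?thesis .
  qed
  have part2: "1 / S \<le> measure_pmf.variance (dataset_pmf Pr pol m n) (U_hat \<delta> pibar pol m n lam)"
    if lnn: "\<forall>i<m. lam i \<ge> 0" and l1: "(\<Sum>i<m. lam i * real (n i)) = 1" for lam
  proof -
    have Snz: "S \<noteq> 0"
    proof
      assume "S = 0"
      then have "\<forall>i\<in>{..<m}. real (n i) / v i = 0"
        unfolding S_def using vpos by (subst sum_nonneg_eq_0_iff[symmetric]) (auto simp: less_imp_le)
      then have "\<forall>i<m. n i = 0" using vpos by (metis lessThan_iff order_less_irrefl divide_eq_0_iff of_nat_eq_0_iff)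
      then have "(\<Sum>i<m. lam i * real (n i)) = 0" by simp
      with l1 show False by simp
    qed
    define T where "T = (\<Sum>i<m. (lam i)\<^sup>2 * real (n i) * v i)"
    have var: "measure_pmf.variance (dataset_pmf Pr pol m n) (U_hat \<delta> pibar pol m n lam) = T"
      unfolding var_U_hat T_def v_def ..
    have tm: "real (n i) * v i * (lam i - 1 / (v i * S))\<^sup>2
        = (lam i)\<^sup>2 * real (n i) * v i - 2 * (lam i * real (n i)) / S + (real (n i) / v i) / S\<^sup>2"
      if "i < m" for i
      using vpos[OF that] Snz by (simp add: power2_eq_square field_simps)
    have "0 \<le> (\<Sum>i<m. real (n i) * v i * (lam i - 1 / (v i * S))\<^sup>2)"
      using vpos by (intro sum_nonneg) (simp add: less_imp_le)
    also have "\<dots> = (\<Sum>i<m. (lam i)\<^sup>2 * real (n i) * v i - 2 * (lam i * real (n i)) / S + (real (n i) / v i) / S\<^sup>2)"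
      using tm by (intro sum.cong refl) simp
    also have "\<dots> = T - 2 * (\<Sum>i<m. lam i * real (n i)) / S + S / S\<^sup>2"
      by (simp add: T_def S_def sum.distrib sum_subtractf sum_divide_distrib sum_distrib_left)
    also have "\<dots> = T - 1 / S"
      unfolding l1 by (simp add: power2_eq_square)
    finally show ?thesis using var by simp
  qed
  show ?thesis using part1 part2 unfolding S_def v_def by blast
qed

end
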